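(* Let $n$ be even, and let $\mathbf{X}=\{X_{rj}:r,j=1,\dots,n\}$ be the switch variables of the standard lightbulb process, with $X_j=(\sum_{r=1}^nX_{rj})\bmod 2$ and $X=\sum_jX_j$. For each $i=1,\dots,n$ construct $\mathbf{X}^i$ as follows. Let $J^i$ have conditional distribution, given $\mathbf{X}$, uniform on $\{j: X_{n/2,j}=1-X_{n/2,i}\}$. If $X_i=1$ set $\mathbf{X}^i=\mathbf{X}$. Otherwise let $\mathbf{X}^i=\{X^i_{rj}\}$ with $X^i_{rj}=X_{rj}$ for $r\ne n/2$; $X^i_{n/2,j}=X_{n/2,j}$ for $j\notin\{i,J^i\}$; $X^i_{n/2,i}=X_{n/2,J^i}$; $X^i_{n/2,J^i}=X_{n/2,i}$ (i.e. the stage $n/2$ switch variables of bulbs $i$ and $J^i$ are interchanged). Let $X^i_j=(\sum_{r=1}^nX^i_{rj})\bmod 2$ and $X^i=\sum_{j=1}^nX^i_j$. Let $I$ be uniform on $\{1,\dots,n\}$, independent of all other variables. Then $X^s=X^I$ has the $X$-size bias distribution, and $$X^s-X=2\,\mathbf{1}_{\{X_I=0,\,X_{J^I}=0\}}\quad\text{and}\quad X\le X^s\le X+2.$$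
   Context: Standard lightbulb process: $n$ bulbs, all initially off, $n$ stages; at stage $r=1,\dots,n$ a uniformly random subset of exactly $r$ bulbs is toggled, independently across stages. The switch variable $X_{rj}\in\{0,1\}$ is $1$ iff bulb $j$ is toggled at stage $r$; thus $P(X_{rj}=e_{rj}\ \forall r,j)=\prod_{r=1}^n\binom{n}{r}^{-1}$ if $\sum_je_{rj}=r$ for all $r$, and $0$ otherwise. A random variable $X^s$ has the $X$-size bias distribution if $E[Xg(X)]=E[X]\,E[g(X^s)]$ for all bounded continuous $g$. *)

theory Defs
  imports "HOL-Probability.Probability"
begin

text \<open>Stage r (1..n) toggles a uniformly random r-subset of the bulbs {1..n},
  independently across stages.  S r is the set of bulbs toggled at stage r.\<close>
definition stage_sets_pmf :: "nat \<Rightarrow> (nat \<Rightarrow> nat set) pmf" where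
  "stage_sets_pmf n =
     Pi_pmf {1..n} {} (\<lambda>r. pmf_of_set {A. A \<subseteq> {1..n} \<and> card A = r})"

text \<open>Switch variables: sw r j = (X_{rj} = 1).\<close>
definition switch_of :: "(nat \<Rightarrow> nat set) \<Rightarrow> nat \<Rightarrow> nat \<Rightarrow> bool" where
  "switch_of S r j = (j \<in> S r)"

definition bulb :: "nat \<Rightarrow> (nat \<Rightarrow> nat \<Rightarrow> bool) \<Rightarrow> nat \<Rightarrow> nat" where
  "bulb n sw j = (\<Sum>r=1..n. if sw r j then 1 else 0) mod 2"

definition total :: "nat \<Rightarrow> (nat \<Rightarrow> nat \<Rightarrow> bool) \<Rightarrow> nat" where
  "total n sw = (\<Sum>j=1..n. bulb n sw j)"

definition swap_stage :: "nat \<Rightarrow> nat \<Rightarrow> nat \<Rightarrow> (nat \<Rightarrow> nat \<Rightarrow> bool) \<Rightarrow> (nat \<Rightarrow> nat \<Rightarrow> bool)" where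
  "swap_stage m i J sw = (\<lambda>r j. if r = m then
       (if j = i then sw r J else if j = J then sw r i else sw r j) else sw r j)"

definition sb_config :: "nat \<Rightarrow> (nat \<Rightarrow> nat \<Rightarrow> bool) \<Rightarrow> nat \<Rightarrow> nat \<Rightarrow> (nat \<Rightarrow> nat \<Rightarrow> bool)" where
  "sb_config n sw i J = (if bulb n sw i = 1 then sw else swap_stage (n div 2) i J sw)"

definition coupling_pmf :: "nat \<Rightarrow> ((nat \<Rightarrow> nat \<Rightarrow> bool) \<times> nat \<times> nat) pmf" where
  "coupling_pmf n =
     do { S \<leftarrow> stage_sets_pmf n;
          I \<leftarrow> pmf_of_set {1..n};
          J \<leftarrow> pmf_of_set {j \<in> {1..n}. switch_of S (n div 2) j \<noteq> switch_of S (n div 2) I};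
          return_pmf (switch_of S, I, J) }"

end

theory Submission
  imports Defs
begin

definition Om :: "nat \<Rightarrow> (nat \<Rightarrow> nat set) set" where
  "Om n = PiE_dflt {1..n} {} (\<lambda>r. {A. A \<subseteq> {1..n} \<and> card A = r})"

lemma subsets_card_ne: "r \<le> n \<Longrightarrow> {A. A \<subseteq> {1..n} \<and> card A = (r::nat)} \<noteq> {}"
  by (rule ccontr) (use card_atLeastAtMost[of 1 r] in \<open>auto dest!: spec[of _ "{1..r}"]\<close>)

lemma subsets_card_fin: "finite {A. A \<subseteq> {1..n::nat} \<and> card A = r}"
  by (rule finite_subset[of _ "Pow {1..n}"]) auto

lemma PiE_dflt_cong': "(\<And>x. x \<in> A \<Longrightarrow> B x = B' x) \<Longrightarrow> PiE_dflt A d B = PiE_dflt A d B'"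
  unfolding PiE_dflt_def by auto

lemma set_stage: "set_pmf (stage_sets_pmf n) = Om n"
proof -
  have h: "\<And>r. r \<in> {1..n} \<Longrightarrow> (set_pmf \<circ> (\<lambda>r. pmf_of_set {A. A \<subseteq> {1..n} \<and> card A = r})) r = {A. A \<subseteq> {1..n} \<and> card A = r}"
    unfolding o_def by (intro set_pmf_of_set subsets_card_fin subsets_card_ne) auto
  show ?thesis unfolding stage_sets_pmf_def Om_def set_Pi_pmf[OF finite_atLeastAtMost]
    by (rule PiE_dflt_cong') (rule h)
qed

lemma finite_Om: "finite (Om n)"
  unfolding Om_def by (intro finite_PiE_dflt) (auto simp: subsets_card_fin)

lemma Om_iff: "S \<in> Om n \<longleftrightarrow> (\<forall>r. (r \<in> {1..n} \<longrightarrow> S r \<subseteq> {1..n} \<and> card (S r) = r) \<and> (r \<notin> {1..n} \<longrightarrow> S r = {}))"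
  unfolding Om_def PiE_dflt_def by auto

definition tr :: "nat \<Rightarrow> nat \<Rightarrow> nat \<Rightarrow> nat" where
  "tr i J x = (if x = i then J else if x = J then i else x)"

lemma tr_tr[simp]: "tr i J (tr i J x) = x"
  by (auto simp: tr_def)

lemma mem_tr_img: "x \<in> tr i J ` A \<longleftrightarrow> tr i J x \<in> A"
  by (metis image_iff tr_tr)

lemma inj_tr: "inj (tr i J)"
  by (metis injI tr_tr)

definition swS :: "nat \<Rightarrow> nat \<Rightarrow> nat \<Rightarrow> (nat \<Rightarrow> nat set) \<Rightarrow> (nat \<Rightarrow> nat set)" where
  "swS m i J S = S(m := tr i J ` S m)"

lemma switch_swS: "switch_of (swS m i J S) = swap_stage m i J (switch_of S)"
proof (intro ext)
  fix r j
  show "switch_of (swS m i J S) r j = swap_stage m i J (switch_of S) r j"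
    by (cases "r = m") (simp_all add: swS_def switch_of_def swap_stage_def mem_tr_img, simp_all add: tr_def)
qed

lemma swS_swS[simp]: "swS m i J (swS m i J S) = S"
  by (auto simp: swS_def image_image intro!: ext)

lemma swS_Om:
  assumes "S \<in> Om n" "i \<in> {1..n}" "J \<in> {1..n}"
  shows "swS m i J S \<in> Om n"
proof -
  have "tr i J ` S m \<subseteq> {1..n}" if "m \<in> {1..n}"
    using assms that unfolding Om_iff by (auto simp: tr_def)
  moreover have "card (tr i J ` S m) = card (S m)"
    by (rule card_image) (meson inj_tr inj_on_subset subset_UNIV)
  moreover have "tr i J ` S m = {}" if "m \<notin> {1..n}"
    using assms that unfolding Om_iff by auto
  ultimately show ?thesis using assms unfolding Om_iff swS_def by auto
qed

lemma pmf_stage_Om: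
  assumes "S \<in> Om n"
  shows "pmf (stage_sets_pmf n) S = (\<Prod>r\<in>{1..n}. 1 / real (card {A. A \<subseteq> {1..n} \<and> card A = r}))"
proof -
  have "pmf (pmf_of_set {A. A \<subseteq> {1..n} \<and> card A = r}) (S r) = 1 / real (card {A. A \<subseteq> {1..n} \<and> card A = r})"
    if r: "r \<in> {1..n}" for r
  proof -
    have ne: "{A. A \<subseteq> {1..n} \<and> card A = r} \<noteq> {}" using r by (intro subsets_card_ne) auto
    have "S r \<in> {A. A \<subseteq> {1..n} \<and> card A = r}" using assms r unfolding Om_iff by auto
    then show ?thesis using pmf_of_set[OF ne subsets_card_fin, of "S r"] by simp
  qed
  then have eq: "(\<Prod>r\<in>{1..n}. pmf (pmf_of_set {A. A \<subseteq> {1..n} \<and> card A = r}) (S r))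
     = (\<Prod>r\<in>{1..n}. 1 / real (card {A. A \<subseteq> {1..n} \<and> card A = r}))"
    by (intro prod.cong refl)
  have out: "\<forall>x. x \<notin> {1..n} \<longrightarrow> S x = {}" using assms unfolding Om_iff by auto
  show ?thesis unfolding stage_sets_pmf_def pmf_Pi[OF finite_atLeastAtMost]
    by (subst if_P[OF out]) (rule eq)
qed

definition opp :: "nat \<Rightarrow> (nat \<Rightarrow> nat set) \<Rightarrow> nat \<Rightarrow> nat set" where
  "opp n S i = {j \<in> {1..n}. switch_of S (n div 2) j \<noteq> switch_of S (n div 2) i}"

lemma opp_eq: "opp n S i = (if i \<in> S (n div 2) then {1..n} - S (n div 2) else {1..n} \<inter> S (n div 2))"
  by (auto simp: opp_def switch_of_def)

lemma card_opp:
  assumes "even n" "n > 0" "S \<in> Om n"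
  shows "card (opp n S i) = n div 2"
proof -
  have m: "n div 2 \<in> {1..n}" using assms by auto
  hence "S (n div 2) \<subseteq> {1..n}" "card (S (n div 2)) = n div 2" using assms(3) unfolding Om_iff by auto
  then show ?thesis using assms(1)
    by (auto simp: opp_eq card_Diff_subset Int_absorb1 finite_subset)
qed

lemma finite_opp: "finite (opp n S i)" by (simp add: opp_def)

lemma opp_ne:
  assumes "even n" "n > 0" "S \<in> Om n"
  shows "opp n S i \<noteq> {}"
proof
  assume "opp n S i = {}"
  with card_opp[OF assms, of i] have "n div 2 = 0" by simp
  with assms(1,2) show False by presburger
qed


lemma bulb_split:
  assumes "m \<in> {1..n}"
  shows "bulb n sw j = ((\<Sum>r\<in>{1..n}-{m}. if sw r j then 1 else 0) + (if sw m j then 1 else 0)) mod 2"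
  unfolding bulb_def by (subst sum.remove[OF finite_atLeastAtMost assms]) (simp only: add.commute)

lemma bulb_01: "bulb n sw j = 0 \<or> bulb n sw j = 1"
  unfolding bulb_def by presburger

lemma flip_mod: "((c::nat) + (if \<not> b then 1 else 0)) mod 2 = 1 - (c + (if b then 1 else 0)) mod 2"
  by (cases b) (simp_all, presburger+)

lemma swap_bulbs:
  assumes m: "m \<in> {1..n}" and ne: "sw m i \<noteq> sw m J"
  shows "bulb n (swap_stage m i J sw) i = 1 - bulb n sw i"
    and "bulb n (swap_stage m i J sw) J = 1 - bulb n sw J"
    and "j \<noteq> i \<Longrightarrow> j \<noteq> J \<Longrightarrow> bulb n (swap_stage m i J sw) j = bulb n sw j"
proof -
  have iJ: "i \<noteq> J" using ne by auto
  have rest: "(\<Sum>r\<in>{1..n}-{m}. if swap_stage m i J sw r j then 1 else 0) = (\<Sum>r\<in>{1..n}-{m}. if sw r j then (1::nat) else 0)" for j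
    by (rule sum.cong) (auto simp: swap_stage_def)
  have si: "swap_stage m i J sw m i = (\<not> sw m i)" and sJ: "swap_stage m i J sw m J = (\<not> sw m J)"
    using ne iJ by (auto simp: swap_stage_def)
  show "bulb n (swap_stage m i J sw) i = 1 - bulb n sw i"
    unfolding bulb_split[OF m] rest si by (rule flip_mod)
  show "bulb n (swap_stage m i J sw) J = 1 - bulb n sw J"
    unfolding bulb_split[OF m] rest sJ by (rule flip_mod)
  show "j \<noteq> i \<Longrightarrow> j \<noteq> J \<Longrightarrow> bulb n (swap_stage m i J sw) j = bulb n sw j"
    unfolding bulb_def by (intro arg_cong[where f="\<lambda>x. x mod 2"] sum.cong) (auto simp: swap_stage_def)
qed

lemma total_remove2:
  assumes "i \<in> {1..n}" "J \<in> {1..n}" "i \<noteq> J"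
  shows "total n sw = bulb n sw i + bulb n sw J + (\<Sum>j\<in>{1..n}-{i}-{J}. bulb n sw j)"
proof -
  have "total n sw = bulb n sw i + (\<Sum>j\<in>{1..n}-{i}. bulb n sw j)"
    unfolding total_def using assms by (subst sum.remove[of _ i]) auto
  also have "(\<Sum>j\<in>{1..n}-{i}. bulb n sw j) = bulb n sw J + (\<Sum>j\<in>{1..n}-{i}-{J}. bulb n sw j)"
    using assms by (subst sum.remove[of _ J]) auto
  finally show ?thesis by simp
qed

lemma total_swap:
  assumes m: "m \<in> {1..n}" and ne: "sw m i \<noteq> sw m J" and "i \<in> {1..n}" "J \<in> {1..n}"
  shows "total n (swap_stage m i J sw) + bulb n sw i + bulb n sw J
       = total n sw + (1 - bulb n sw i) + (1 - bulb n sw J)"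
proof -
  have iJ: "i \<noteq> J" using ne by auto
  have "(\<Sum>j\<in>{1..n}-{i}-{J}. bulb n (swap_stage m i J sw) j) = (\<Sum>j\<in>{1..n}-{i}-{J}. bulb n sw j)"
    by (rule sum.cong) (auto intro: swap_bulbs(3)[of m n sw i J, OF m ne])
  then show ?thesis
    using total_remove2[OF assms(3,4) iJ, of sw] total_remove2[OF assms(3,4) iJ, of "swap_stage m i J sw"]
      swap_bulbs(1,2)[of m n sw i J, OF m ne] by simp
qed

lemma m_in: "even (n::nat) \<Longrightarrow> n > 0 \<Longrightarrow> n div 2 \<in> {1..n}"
  by auto

lemma coupling_alt: "coupling_pmf n = stage_sets_pmf n \<bind> (\<lambda>S. pmf_of_set {1..n} \<bind>
   (\<lambda>I. pmf_of_set (opp n S I) \<bind> (\<lambda>J. return_pmf (switch_of S, I, J))))"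
  by (simp add: coupling_pmf_def opp_def)

lemma set_coupling:
  assumes "even n" "n > 0" "x \<in> set_pmf (coupling_pmf n)"
  shows "\<exists>S I J. x = (switch_of S, I, J) \<and> S \<in> Om n \<and> I \<in> {1..n} \<and> J \<in> opp n S I"
  using assms(3) unfolding coupling_alt
  using assms(1,2) by (auto simp: set_bind_pmf set_stage opp_ne finite_opp)

lemma swS_props:
  assumes "even n" "n > 0" "S \<in> Om n" "i \<in> {1..n}" "J \<in> opp n S i"
  shows "swS (n div 2) i J S \<in> Om n" "J \<in> opp n (swS (n div 2) i J S) i"
    "bulb n (switch_of (swS (n div 2) i J S)) i = 1 - bulb n (switch_of S) i"
proof -
  have J: "J \<in> {1..n}" and ne: "switch_of S (n div 2) i \<noteq> switch_of S (n div 2) J"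
    using assms(5) unfolding opp_def by simp_all
  show "swS (n div 2) i J S \<in> Om n" using swS_Om[OF assms(3,4) J] .
  show "J \<in> opp n (swS (n div 2) i J S) i"
  proof -
    have a: "swap_stage (n div 2) i J (switch_of S) (n div 2) J = switch_of S (n div 2) i"
      by (simp add: swap_stage_def)
    have b: "swap_stage (n div 2) i J (switch_of S) (n div 2) i = switch_of S (n div 2) J"
      by (simp add: swap_stage_def)
    show ?thesis unfolding opp_def switch_swS mem_Collect_eq a b using J ne by blast
  qed
  show "bulb n (switch_of (swS (n div 2) i J S)) i = 1 - bulb n (switch_of S) i"
    unfolding switch_swS by (rule swap_bulbs(1)[of "n div 2" n "switch_of S" i J, OF m_in[OF assms(1,2)] ne])
qed


lemma fin_inner:
  assumes "even n" "n > 0" "S \<in> Om n"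
  shows "finite (set_pmf (pmf_of_set {1..n} \<bind> (\<lambda>I. pmf_of_set (opp n S I) \<bind> (\<lambda>J. return_pmf (switch_of S, I, J)))))"
  using assms by (auto simp: set_bind_pmf opp_ne finite_opp)

lemma E_coupling:
  fixes h :: "(nat \<Rightarrow> nat \<Rightarrow> bool) \<times> nat \<times> nat \<Rightarrow> real"
  assumes "even n" "n > 0"
  shows "measure_pmf.expectation (coupling_pmf n) h =
    (\<Sum>S\<in>Om n. pmf (stage_sets_pmf n) S *
       ((\<Sum>I\<in>{1..n}. (\<Sum>J\<in>opp n S I. h (switch_of S, I, J)) / real (n div 2)) / real n))"
  unfolding coupling_alt
proof (subst pmf_expectation_bind[of "Om n"])
  show "finite (Om n)" by (rule finite_Om)
  show "\<And>x. x \<in> Om n \<Longrightarrow> finite (set_pmf (pmf_of_set {1..n} \<bind> (\<lambda>I. pmf_of_set (opp n x I) \<bind> (\<lambda>J. return_pmf (switch_of x, I, J)))))"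
    using fin_inner[OF assms] .
  show "set_pmf (stage_sets_pmf n) \<subseteq> Om n" by (simp add: set_stage)
  show "(\<Sum>a\<in>Om n. pmf (stage_sets_pmf n) a *\<^sub>R measure_pmf.expectation (pmf_of_set {1..n} \<bind> (\<lambda>I. pmf_of_set (opp n a I) \<bind> (\<lambda>J. return_pmf (switch_of a, I, J)))) h) =
    (\<Sum>S\<in>Om n. pmf (stage_sets_pmf n) S * ((\<Sum>I = 1..n. (\<Sum>J\<in>opp n S I. h (switch_of S, I, J)) / real (n div 2)) / real n))"
  proof (rule sum.cong[OF refl])
    fix S assume S: "S \<in> Om n"
    have "measure_pmf.expectation (pmf_of_set {1..n} \<bind> (\<lambda>I. pmf_of_set (opp n S I) \<bind> (\<lambda>J. return_pmf (switch_of S, I, J)))) h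
       = (\<Sum>I = 1..n. measure_pmf.expectation (pmf_of_set (opp n S I) \<bind> (\<lambda>J. return_pmf (switch_of S, I, J))) h / real n)"
      using assms by (subst pmf_expectation_bind_pmf_of_set) (auto simp: set_bind_pmf opp_ne finite_opp S divide_inverse mult.commute)
    also have "\<dots> = (\<Sum>I = 1..n. ((\<Sum>J\<in>opp n S I. h (switch_of S, I, J)) / real (n div 2)) / real n)"
    proof (rule sum.cong[OF refl])
      fix I
      show "measure_pmf.expectation (pmf_of_set (opp n S I) \<bind> (\<lambda>J. return_pmf (switch_of S, I, J))) h / real n
          = ((\<Sum>J\<in>opp n S I. h (switch_of S, I, J)) / real (n div 2)) / real n"
        using assms S by (subst pmf_expectation_bind_pmf_of_set)
          (auto simp: opp_ne finite_opp card_opp sum_divide_distrib divide_inverse mult.commute sum_distrib_left)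
    qed
    finally show "pmf (stage_sets_pmf n) S *\<^sub>R measure_pmf.expectation (pmf_of_set {1..n} \<bind> (\<lambda>I. pmf_of_set (opp n S I) \<bind> (\<lambda>J. return_pmf (switch_of S, I, J)))) h =
         pmf (stage_sets_pmf n) S * ((\<Sum>I = 1..n. (\<Sum>J\<in>opp n S I. h (switch_of S, I, J)) / real (n div 2)) / real n)"
      by (simp add: sum_divide_distrib)
  qed
qed

lemma key:
  fixes g :: "real \<Rightarrow> real"
  assumes "even n" "n > 0" "i \<in> {1..n}"
  shows "(\<Sum>S\<in>Om n. \<Sum>J\<in>opp n S i. g (real (total n (sb_config n (switch_of S) i J))))
       = 2 * real (n div 2) * (\<Sum>S\<in>Om n. if bulb n (switch_of S) i = 1 then g (real (total n (switch_of S))) else 0)"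
proof -
  define O1 where "O1 = {S\<in>Om n. bulb n (switch_of S) i = 1}"
  define O0 where "O0 = {S\<in>Om n. bulb n (switch_of S) i = 0}"
  define G where "G = (\<lambda>S J. g (real (total n (sb_config n (switch_of S) i J))))"
  define H where "H = (\<lambda>S. g (real (total n (switch_of S))))"
  have fin1: "finite O1" and fin0: "finite O0" using finite_Om by (auto simp: O1_def O0_def)
  have b01: "bulb n (switch_of S) i = 0 \<or> bulb n (switch_of S) i = 1" for S by (rule bulb_01)
  have split: "Om n = O1 \<union> O0" "O1 \<inter> O0 = {}" unfolding O1_def O0_def using b01 by blast auto
  have "(\<Sum>S\<in>Om n. \<Sum>J\<in>opp n S i. G S J) = (\<Sum>S\<in>O1. \<Sum>J\<in>opp n S i. G S J) + (\<Sum>S\<in>O0. \<Sum>J\<in>opp n S i. G S J)"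
    unfolding split(1) by (rule sum.union_disjoint[OF fin1 fin0 split(2)])
  also have "(\<Sum>S\<in>O1. \<Sum>J\<in>opp n S i. G S J) = (\<Sum>S\<in>O1. real (n div 2) * H S)"
    by (rule sum.cong[OF refl]) (simp add: G_def H_def O1_def sb_config_def card_opp[OF assms(1,2)])
  also have "(\<Sum>S\<in>O0. \<Sum>J\<in>opp n S i. G S J) = (\<Sum>p\<in>Sigma O0 (\<lambda>S. opp n S i). G (fst p) (snd p))"
    by (subst sum.Sigma) (auto simp: fin0 finite_opp split_def)
  also have "\<dots> = (\<Sum>p\<in>Sigma O1 (\<lambda>S. opp n S i). H (fst p))"
  proof (rule sum.reindex_bij_witness[where i="\<lambda>(S,J). (swS (n div 2) i J S, J)" and j="\<lambda>(S,J). (swS (n div 2) i J S, J)"])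
    fix a assume a: "a \<in> Sigma O0 (\<lambda>S. opp n S i)"
    then obtain S J where [simp]: "a = (S, J)" and S: "S \<in> Om n" "bulb n (switch_of S) i = 0" and J: "J \<in> opp n S i"
      by (auto simp: O0_def)
    show "(case case a of (S, J) \<Rightarrow> (swS (n div 2) i J S, J) of (S, J) \<Rightarrow> (swS (n div 2) i J S, J)) = a" by simp
    show "(case a of (S, J) \<Rightarrow> (swS (n div 2) i J S, J)) \<in> Sigma O1 (\<lambda>S. opp n S i)"
      using swS_props[OF assms(1,2) S(1) assms(3) J] S(2) by (simp add: O1_def)
    show "H (fst (case a of (S, J) \<Rightarrow> (swS (n div 2) i J S, J))) = G (fst a) (snd a)"
      using S(2) by (simp add: H_def G_def sb_config_def switch_swS)
  next
    fix b assume b: "b \<in> Sigma O1 (\<lambda>S. opp n S i)"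
    then obtain S J where [simp]: "b = (S, J)" and S: "S \<in> Om n" "bulb n (switch_of S) i = 1" and J: "J \<in> opp n S i"
      by (auto simp: O1_def)
    show "(case case b of (S, J) \<Rightarrow> (swS (n div 2) i J S, J) of (S, J) \<Rightarrow> (swS (n div 2) i J S, J)) = b" by simp
    show "(case b of (S, J) \<Rightarrow> (swS (n div 2) i J S, J)) \<in> Sigma O0 (\<lambda>S. opp n S i)"
      using swS_props[OF assms(1,2) S(1) assms(3) J] S(2) by (simp add: O0_def)
  qed
  also have "\<dots> = (\<Sum>S\<in>O1. \<Sum>J\<in>opp n S i. H S)"
    by (subst sum.Sigma) (auto simp: fin1 finite_opp split_def)
  also have "\<dots> = (\<Sum>S\<in>O1. real (n div 2) * H S)"
    by (rule sum.cong[OF refl]) (simp add: O1_def card_opp[OF assms(1,2)])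
  finally have "(\<Sum>S\<in>Om n. \<Sum>J\<in>opp n S i. G S J) = 2 * real (n div 2) * (\<Sum>S\<in>O1. H S)"
    by (simp add: sum_distrib_left mult.assoc)
  also have "(\<Sum>S\<in>O1. H S) = (\<Sum>S\<in>Om n. if bulb n (switch_of S) i = 1 then H S else 0)"
    unfolding O1_def by (rule sum.inter_filter[OF finite_Om])
  finally show ?thesis unfolding G_def H_def .
qed


lemma E_const:
  fixes f :: "(nat \<Rightarrow> nat \<Rightarrow> bool) \<Rightarrow> real"
  assumes "even n" "n > 0"
  shows "measure_pmf.expectation (coupling_pmf n) (\<lambda>(sw, I, J). f sw) =
    (\<Sum>S\<in>Om n. pmf (stage_sets_pmf n) S * f (switch_of S))"
  unfolding E_coupling[OF assms]
proof (rule sum.cong[OF refl])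
  fix S assume S: "S \<in> Om n"
  have m: "real (n div 2) > 0" using assms by auto
  have "(\<Sum>I = 1..n. (\<Sum>J\<in>opp n S I. (case (switch_of S, I, J) of (sw, I, J) \<Rightarrow> f sw)) / real (n div 2)) = (\<Sum>I = 1..n. f (switch_of S))"
    using card_opp[OF assms S] m by (intro sum.cong refl) simp
  also have "\<dots> = real n * f (switch_of S)" by simp
  finally show "pmf (stage_sets_pmf n) S * ((\<Sum>I = 1..n. (\<Sum>J\<in>opp n S I. (case (switch_of S, I, J) of (sw, I, J) \<Rightarrow> f sw)) / real (n div 2)) / real n)
      = pmf (stage_sets_pmf n) S * f (switch_of S)"
    using assms by simp
qed

lemma X_sum: "real (total n sw) = (\<Sum>I\<in>{1..n}. if bulb n sw I = 1 then 1 else 0)"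
  unfolding total_def of_nat_sum
proof (rule sum.cong[OF refl])
  fix I show "real (bulb n sw I) = (if bulb n sw I = 1 then 1 else 0)"
    using bulb_01[of n sw I] by auto
qed

theorem theorem3p1:
  fixes n :: nat
  assumes "even n" and "n > 0"
  shows "(\<forall>g :: real \<Rightarrow> real. bounded (range g) \<longrightarrow> continuous_on UNIV g \<longrightarrow>
            measure_pmf.expectation (coupling_pmf n)
              (\<lambda>(sw, I, J). real (total n sw) * g (real (total n sw)))
          = measure_pmf.expectation (coupling_pmf n) (\<lambda>(sw, I, J). real (total n sw))
            * measure_pmf.expectation (coupling_pmf n)
                (\<lambda>(sw, I, J). g (real (total n (sb_config n sw I J)))))
       \<and> (\<forall>(sw, I, J) \<in> set_pmf (coupling_pmf n).
            real (total n (sb_config n sw I J)) - real (total n sw)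
              = 2 * (if bulb n sw I = 0 \<and> bulb n sw J = 0 then 1 else 0)
            \<and> total n sw \<le> total n (sb_config n sw I J)
            \<and> total n (sb_config n sw I J) \<le> total n sw + 2)"
proof (intro conjI allI impI)
  fix g :: "real \<Rightarrow> real"
  define c where "c = (\<Prod>r\<in>{1..n}. 1 / real (card {A. A \<subseteq> {1..n} \<and> card A = r}))"
  define m where "m = n div 2"
  define X where "X = (\<lambda>S. real (total n (switch_of S)))"
  define A where "A = (\<Sum>S\<in>Om n. X S * g (X S))"
  have mpos: "real m > 0" using assms by (auto simp: m_def)
  have npos: "real n > 0" using assms by auto
  have pmfc: "pmf (stage_sets_pmf n) S = c" if "S \<in> Om n" for S
    using pmf_stage_Om[OF that] by (simp add: c_def)
  have "(\<Sum>S\<in>Om n. pmf (stage_sets_pmf n) S) = 1"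
    by (rule sum_pmf_eq_1[OF finite_Om]) (simp add: set_stage)
  then have cN: "c * real (card (Om n)) = 1"
    using pmfc by (simp add: mult.commute)
  have half: "(\<Sum>S\<in>Om n. if bulb n (switch_of S) i = 1 then 1 else 0) = real (card (Om n)) / 2"
    if i: "i \<in> {1..n}" for i
  proof -
    have "(\<Sum>S\<in>Om n. \<Sum>J\<in>opp n S i. (\<lambda>_. 1::real) (real (total n (sb_config n (switch_of S) i J))))
        = real (card (Om n)) * real m"
      using card_opp[OF assms] by (simp add: m_def)
    with key[OF assms i, of "\<lambda>_. 1"] mpos show ?thesis by (simp add: m_def)
  qed
  have E1: "measure_pmf.expectation (coupling_pmf n) (\<lambda>(sw, I, J). real (total n sw) * g (real (total n sw))) = c * A"
    unfolding E_const[OF assms, of "\<lambda>sw. real (total n sw) * g (real (total n sw))"] A_def sum_distrib_left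
    by (intro sum.cong refl) (simp add: pmfc X_def)
  have "measure_pmf.expectation (coupling_pmf n) (\<lambda>(sw, I, J). real (total n sw)) = c * (\<Sum>S\<in>Om n. X S)"
    unfolding E_const[OF assms, of "\<lambda>sw. real (total n sw)"] sum_distrib_left
    by (intro sum.cong refl) (simp add: pmfc X_def)
  also have "(\<Sum>S\<in>Om n. X S) = (\<Sum>I\<in>{1..n}. \<Sum>S\<in>Om n. if bulb n (switch_of S) I = 1 then 1 else 0)"
    unfolding X_def X_sum by (rule sum.swap)
  also have "\<dots> = (\<Sum>I\<in>{1..n}. real (card (Om n)) / 2)"
    by (intro sum.cong refl half) 
  also have "c * (\<Sum>I\<in>{1..n}. real (card (Om n)) / 2) = real n * (c * real (card (Om n))) / 2"
    by simp
  also have "\<dots> = real n / 2" unfolding cN by simp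
  finally have E2: "measure_pmf.expectation (coupling_pmf n) (\<lambda>(sw, I, J). real (total n sw)) = real n / 2" .
  define G where "G = (\<lambda>S I J. g (real (total n (sb_config n (switch_of S) I J))))"
  have "measure_pmf.expectation (coupling_pmf n) (\<lambda>(sw, I, J). g (real (total n (sb_config n sw I J))))
      = (\<Sum>S\<in>Om n. c * ((\<Sum>I = 1..n. (\<Sum>J\<in>opp n S I. G S I J) / real m) / real n))"
    unfolding E_coupling[OF assms] G_def m_def by (intro sum.cong refl) (simp add: pmfc)
  also have "\<dots> = c / (real m * real n) * (\<Sum>S\<in>Om n. \<Sum>I = 1..n. \<Sum>J\<in>opp n S I. G S I J)"
    by (simp add: sum_distrib_left sum_divide_distrib)
  also have "(\<Sum>S\<in>Om n. \<Sum>I = 1..n. \<Sum>J\<in>opp n S I. G S I J) = (\<Sum>I = 1..n. \<Sum>S\<in>Om n. \<Sum>J\<in>opp n S I. G S I J)"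
    by (rule sum.swap)
  also have "\<dots> = (\<Sum>I = 1..n. 2 * real m * (\<Sum>S\<in>Om n. if bulb n (switch_of S) I = 1 then g (X S) else 0))"
    unfolding G_def X_def m_def by (intro sum.cong refl key[OF assms]) 
  also have "\<dots> = 2 * real m * (\<Sum>S\<in>Om n. \<Sum>I = 1..n. if bulb n (switch_of S) I = 1 then g (X S) else 0)"
    by (simp add: sum_distrib_left) (rule sum.swap)
  also have "(\<Sum>S\<in>Om n. \<Sum>I = 1..n. if bulb n (switch_of S) I = 1 then g (X S) else 0) = A"
    unfolding A_def
  proof (intro sum.cong refl)
    fix S
    show "(\<Sum>I = 1..n. if bulb n (switch_of S) I = 1 then g (X S) else 0) = X S * g (X S)"
      unfolding X_def X_sum sum_distrib_right by (intro sum.cong refl) simp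
  qed
  finally have E3: "measure_pmf.expectation (coupling_pmf n) (\<lambda>(sw, I, J). g (real (total n (sb_config n sw I J))))
      = c / (real m * real n) * (2 * real m * A)" .
  show "measure_pmf.expectation (coupling_pmf n) (\<lambda>(sw, I, J). real (total n sw) * g (real (total n sw)))
      = measure_pmf.expectation (coupling_pmf n) (\<lambda>(sw, I, J). real (total n sw))
      * measure_pmf.expectation (coupling_pmf n) (\<lambda>(sw, I, J). g (real (total n (sb_config n sw I J))))"
    unfolding E1 E2 E3 using mpos npos by (simp add: field_simps)
next
  show "\<forall>(sw, I, J) \<in> set_pmf (coupling_pmf n).
            real (total n (sb_config n sw I J)) - real (total n sw)
              = 2 * (if bulb n sw I = 0 \<and> bulb n sw J = 0 then 1 else 0)
            \<and> total n sw \<le> total n (sb_config n sw I J)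
            \<and> total n (sb_config n sw I J) \<le> total n sw + 2"
  proof (clarify)
    fix sw I J assume x: "(sw, I, J) \<in> set_pmf (coupling_pmf n)"
    obtain S where sw: "sw = switch_of S" and S: "S \<in> Om n" and I: "I \<in> {1..n}" and J: "J \<in> opp n S I"
      using set_coupling[OF assms x] by blast
    have J1: "J \<in> {1..n}" and ne: "sw (n div 2) I \<noteq> sw (n div 2) J"
      using J unfolding opp_def sw by simp_all
    show "real (total n (sb_config n sw I J)) - real (total n sw)
              = 2 * (if bulb n sw I = 0 \<and> bulb n sw J = 0 then 1 else 0)
            \<and> total n sw \<le> total n (sb_config n sw I J)
            \<and> total n (sb_config n sw I J) \<le> total n sw + 2"
    proof (cases "bulb n sw I = 1")
      case True
      then show ?thesis by (simp add: sb_config_def)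
    next
      case False
      then have b0: "bulb n sw I = 0" using bulb_01[of n sw I] by auto
      have eq: "total n (swap_stage (n div 2) I J sw) + bulb n sw I + bulb n sw J
          = total n sw + (1 - bulb n sw I) + (1 - bulb n sw J)"
        by (rule total_swap[of "n div 2" n sw I J, OF m_in[OF assms] ne I J1])
      show ?thesis using eq b0 bulb_01[of n sw J] by (auto simp: sb_config_def)
    qed
  qed
qed

end
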